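(* Define $\beta=(\beta_n)_{n\ge0}$ by $\beta_n=1$ for $0\le n\le 3!=6$, and for each integer $k\ge3$: $\beta_n=\frac1{k!}$ for $k!<n\le(k+1)!-2$ and for $n=(k+1)!$, and $\beta_n=\frac1{(k+1)!}$ for $n=(k+1)!-1$. Then for every $a\in(0,1)$, the map $T_a$ does not induce a bounded composition operator on $H^2(\beta)$.
   Context: $H^2(\beta)$ is the Hilbert space of analytic functions $f(z)=\sum_{n\ge0}a_nz^n$ on the unit disk $\mathbb D$ with $\|f\|^2=\sum_{n\ge0}|a_n|^2\beta_n<\infty$. $T_a(z)=\frac{a+z}{1+\bar a z}$ and $C_{T_a}f=f\circ T_a$. *)

theory Defs
  imports "HOL-Analysis.Analysis"
begin

definition taylor_coeff :: "(complex \<Rightarrow> complex) \<Rightarrow> nat \<Rightarrow> complex" where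
  "taylor_coeff f n = (deriv ^^ n) f 0 / of_nat (fact n)"

definition in_H2 :: "(nat \<Rightarrow> real) \<Rightarrow> (complex \<Rightarrow> complex) \<Rightarrow> bool" where
  "in_H2 \<beta> f \<longleftrightarrow> f holomorphic_on ball 0 1 \<and>
     summable (\<lambda>n. (cmod (taylor_coeff f n))\<^sup>2 * \<beta> n)"

definition H2_norm :: "(nat \<Rightarrow> real) \<Rightarrow> (complex \<Rightarrow> complex) \<Rightarrow> real" where
  "H2_norm \<beta> f = sqrt (\<Sum>n. (cmod (taylor_coeff f n))\<^sup>2 * \<beta> n)"

definition T :: "complex \<Rightarrow> complex \<Rightarrow> complex" where
  "T a z = (a + z) / (1 + cnj a * z)"

definition bounded_comp_op :: "(nat \<Rightarrow> real) \<Rightarrow> (complex \<Rightarrow> complex) \<Rightarrow> bool" where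
  "bounded_comp_op \<beta> \<phi> \<longleftrightarrow>
     (\<exists>C. \<forall>f. in_H2 \<beta> f \<longrightarrow> in_H2 \<beta> (f \<circ> \<phi>) \<and> H2_norm \<beta> (f \<circ> \<phi>) \<le> C * H2_norm \<beta> f)"

definition beta0 :: "nat \<Rightarrow> real" where
  "beta0 n = (if n \<le> 6 then 1 else
     (let k = (THE k. 3 \<le> k \<and> fact k < n \<and> n \<le> (fact (Suc k) :: nat)) in
      if n = fact (Suc k) - 1 then 1 / fact (Suc k) else 1 / fact k))"

end

theory Submission
  imports Defs
begin

definition l2 :: "real fps \<Rightarrow> bool" where "l2 f \<longleftrightarrow> summable (\<lambda>n. ((fps_nth f n))^2)"
definition nr :: "real fps \<Rightarrow> real" where "nr f = (\<Sum>n. ((fps_nth f n))^2)"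
definition ip :: "real fps \<Rightarrow> real fps \<Rightarrow> real" where "ip f g = (\<Sum>n. (fps_nth f n) * (fps_nth g n))"

lemma l2_prod_summable: assumes "l2 f" "l2 g" shows "summable (\<lambda>n. (fps_nth f n) * (fps_nth g n))"
proof -
  have s: "summable (\<lambda>n. (((fps_nth f n))^2 + ((fps_nth g n))^2)/2)"
    using assms unfolding l2_def by (intro summable_divide summable_add) auto
  show ?thesis
  proof (rule summable_comparison_test[OF _ s])
    have "\<bar>x*y\<bar> \<le> (x^2+y^2)/2" for x y :: real
    proof -
      have "0 \<le> (\<bar>x\<bar> - \<bar>y\<bar>)^2" by simp
      then show ?thesis by (simp add: power2_diff abs_mult)
    qed
    then show "\<exists>N. \<forall>n\<ge>N. norm (fps_nth f n * fps_nth g n) \<le> ((fps_nth f n)\<^sup>2 + (fps_nth g n)\<^sup>2) / 2"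
      by auto
  qed
qed

lemma nr_nonneg: "l2 f \<Longrightarrow> 0 \<le> nr f"
  unfolding nr_def l2_def by (intro suminf_nonneg) auto

lemma l2_add: "l2 f \<Longrightarrow> l2 g \<Longrightarrow> l2 (f + g)"
proof -
  assume a: "l2 f" "l2 g"
  have "summable (\<lambda>n. ((fps_nth f n))^2 + 2*((fps_nth f n)*(fps_nth g n)) + ((fps_nth g n))^2)"
    using a l2_prod_summable[OF a] unfolding l2_def by (intro summable_add summable_mult) auto
  then show ?thesis unfolding l2_def by (simp add: power2_sum algebra_simps)
qed

lemma l2_cmult: "l2 f \<Longrightarrow> l2 (fps_const c * f)"
  unfolding l2_def by (simp add: power_mult_distrib summable_mult)

lemma l2_uminus: "l2 f \<Longrightarrow> l2 (- f)"
  unfolding l2_def by simp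

lemma l2_diff: "l2 f \<Longrightarrow> l2 g \<Longrightarrow> l2 (f - g)"
  using l2_add[of f "-g"] l2_uminus by simp

lemma l2_one: "l2 1"
proof -
  have "summable (\<lambda>n. if n = 0 then (1::real) else 0)" by (rule summable_single)
  moreover have "(\<lambda>n. (fps_nth (1::real fps) n)^2) = (\<lambda>n. if n = 0 then (1::real) else 0)" by (auto simp: fps_one_nth)
  ultimately show ?thesis unfolding l2_def by simp
qed

lemma l2_X: "l2 f \<Longrightarrow> l2 (fps_X * f)"
proof -
  assume "l2 f"
  then have "summable (\<lambda>n. ((fps_nth (fps_X * f) (Suc n)))^2)" unfolding l2_def by simp
  then show ?thesis unfolding l2_def by (subst summable_Suc_iff[symmetric])
qed

lemma nr_X: "l2 f \<Longrightarrow> nr (fps_X * f) = nr f"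
proof -
  assume a: "l2 f"
  then have "l2 (fps_X * f)" by (rule l2_X)
  then have "(\<Sum>n. ((fps_nth (fps_X * f) (Suc n)))^2) = nr (fps_X * f) - ((fps_nth (fps_X * f) 0))^2"
    unfolding nr_def l2_def by (rule suminf_split_head)
  then show ?thesis unfolding nr_def by simp
qed

lemma ip_X: "l2 f \<Longrightarrow> l2 g \<Longrightarrow> ip (fps_X * f) (fps_X * g) = ip f g"
proof -
  assume a: "l2 f" "l2 g"
  then have "summable (\<lambda>n. (fps_nth (fps_X * f) n) * (fps_nth (fps_X * g) n))" by (intro l2_prod_summable l2_X)
  then have "(\<Sum>n. (fps_nth (fps_X * f) (Suc n)) * (fps_nth (fps_X * g) (Suc n))) = ip (fps_X * f) (fps_X * g) - 0"
    unfolding ip_def by (subst suminf_split_head) auto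
  then show ?thesis unfolding ip_def by simp
qed

lemma nr_add: assumes "l2 f" "l2 g" shows "nr (f + g) = nr f + 2 * ip f g + nr g"
proof -
  have s: "summable (\<lambda>n. ((fps_nth f n))^2)" "summable (\<lambda>n. 2*((fps_nth f n)*(fps_nth g n)))" "summable (\<lambda>n. ((fps_nth g n))^2)"
    using assms l2_prod_summable[OF assms] unfolding l2_def by (auto intro: summable_mult)
  have "nr (f+g) = (\<Sum>n. ((fps_nth f n))^2 + 2*((fps_nth f n)*(fps_nth g n)) + ((fps_nth g n))^2)"
    unfolding nr_def by (simp add: power2_sum algebra_simps)
  also have "\<dots> = (\<Sum>n. ((fps_nth f n))^2 + 2*((fps_nth f n)*(fps_nth g n))) + (\<Sum>n. ((fps_nth g n))^2)"
    using s by (intro suminf_add[symmetric] summable_add) auto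
  also have "(\<Sum>n. ((fps_nth f n))^2 + 2*((fps_nth f n)*(fps_nth g n))) = (\<Sum>n. ((fps_nth f n))^2) + (\<Sum>n. 2*((fps_nth f n)*(fps_nth g n)))"
    using s by (intro suminf_add[symmetric]) auto
  also have "(\<Sum>n. 2*((fps_nth f n)*(fps_nth g n))) = 2 * ip f g"
    unfolding ip_def using l2_prod_summable[OF assms] by (rule suminf_mult)
  finally show ?thesis unfolding nr_def by simp
qed

lemma nr_cmult: "l2 f \<Longrightarrow> nr (fps_const c * f) = c^2 * nr f"
  unfolding nr_def l2_def by (simp add: power_mult_distrib suminf_mult)

lemma ip_cmult: "l2 f \<Longrightarrow> l2 g \<Longrightarrow> ip (fps_const c * f) g = c * ip f g"
  unfolding ip_def by (drule l2_prod_summable) (auto simp: suminf_mult mult.assoc)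

lemma ip_comm: "ip f g = ip g f"
  unfolding ip_def by (simp add: mult.commute)

lemma nr_ip: "nr f = ip f f"
  unfolding nr_def ip_def by (simp add: power2_eq_square)

lemma ip_add: assumes "l2 f" "l2 g" "l2 h" shows "ip (f + g) h = ip f h + ip g h"
  unfolding ip_def using l2_prod_summable[OF assms(1,3)] l2_prod_summable[OF assms(2,3)]
  by (simp add: distrib_right suminf_add)

lemma ip_bound: assumes "l2 f" "l2 g" shows "2 * ip f g \<le> nr f + nr g"
proof -
  have "0 \<le> nr (f - g)" using assms by (intro nr_nonneg l2_diff)
  also have "nr (f - g) = nr f - 2 * ip f g + nr g"
    using nr_add[OF assms(1) l2_uminus[OF assms(2)]] 
    using suminf_minus[OF l2_prod_summable[OF assms]] by (simp add: ip_def nr_def)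
  finally show ?thesis by simp
qed


lemma l2_Q: assumes y: "l2 y" and g: "0 \<le> g" "g < 1"
  shows "l2 (inverse (1 + fps_const g * fps_X) * y)"
proof -
  define x where "x = inverse (1 + fps_const g * fps_X) * y"
  have inv: "(1 + fps_const g * fps_X) * inverse (1 + fps_const g * fps_X) = (1::real fps)"
    by (rule inverse_mult_eq_1') simp
  have "(1 + fps_const g * fps_X) * x = y"
    unfolding x_def by (simp add: mult.assoc[symmetric] inv)
  moreover have "fps_nth ((1 + fps_const g * fps_X) * x) n = fps_nth x n + g * fps_nth (fps_X * x) n" for n
    by (simp add: distrib_right mult.assoc del: fps_X_mult_nth)
  ultimately have xe: "fps_nth x n = fps_nth y n + (- g * fps_nth (fps_X * x) n)" for n
    by (metis add_diff_cancel_right' diff_conv_add_uminus minus_mult_left)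
  define Y where "Y = nr y"
  have bound: "(\<Sum>n<K. (fps_nth x n)^2) \<le> Y / (1-g)^2" for K
  proof -
    have sh: "(\<Sum>n<K. (fps_nth (fps_X * x) n)^2) \<le> (\<Sum>n<K. (fps_nth x n)^2)"
    proof -
      have "(\<Sum>n<K. (fps_nth (fps_X * x) n)^2) \<le> (\<Sum>n<Suc K. (fps_nth (fps_X * x) n)^2)"
        by simp
      also have "\<dots> = (\<Sum>n<K. (fps_nth x n)^2)"
        by (subst sum.lessThan_Suc_shift) simp
      finally show ?thesis .
    qed
    have h1: "L2_set (fps_nth x) {..<K} \<le> L2_set (fps_nth y) {..<K} + L2_set (\<lambda>n. - g * fps_nth (fps_X * x) n) {..<K}"
      unfolding xe by (rule L2_set_triangle_ineq)
    have h2: "L2_set (\<lambda>n. - g * fps_nth (fps_X * x) n) {..<K} = g * L2_set (fps_nth (fps_X * x)) {..<K}"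
      using g by (simp add: L2_set_def power_mult_distrib real_sqrt_mult sum_distrib_left[symmetric])
    have h3: "L2_set (fps_nth (fps_X * x)) {..<K} \<le> L2_set (fps_nth x) {..<K}"
      unfolding L2_set_def using sh by (simp del: fps_X_mult_nth)
    have h4: "L2_set (fps_nth y) {..<K} \<le> sqrt Y"
      unfolding L2_set_def Y_def nr_def using y unfolding l2_def
      by (intro real_sqrt_le_mono sum_le_suminf) auto
    have "L2_set (fps_nth x) {..<K} \<le> sqrt Y + g * L2_set (fps_nth x) {..<K}"
      using h1 h2 h3 h4 g mult_left_mono[OF h3 g(1)] by linarith
    then have "(1-g) * L2_set (fps_nth x) {..<K} \<le> sqrt Y" by (simp add: algebra_simps)
    then have "L2_set (fps_nth x) {..<K} \<le> sqrt Y / (1-g)" using g by (simp add: field_simps)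
    then have "(L2_set (fps_nth x) {..<K})^2 \<le> (sqrt Y / (1-g))^2"
      by (intro power_mono) auto
    also have "(L2_set (fps_nth x) {..<K})^2 = (\<Sum>n<K. (fps_nth x n)^2)"
      unfolding L2_set_def by (simp add: sum_nonneg)
    also have "(sqrt Y / (1-g))^2 = Y / (1-g)^2"
      using nr_nonneg[OF y] unfolding Y_def by (simp add: power_divide)
    finally show ?thesis .
  qed
  have "summable (\<lambda>n. (fps_nth x n)^2)"
    by (rule summableI_nonneg_bounded[OF _ bound]) auto
  then show ?thesis unfolding x_def l2_def .
qed

lemma nr_lin: assumes "l2 x"
  shows "nr ((fps_const p + fps_const q * fps_X) * x) = (p^2 + q^2) * nr x + 2*(p*q) * ip x (fps_X * x)"
proof -
  have e: "(fps_const p + fps_const q * fps_X) * x = fps_const p * x + fps_const q * (fps_X * x)"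
    by (simp add: algebra_simps)
  have l: "l2 (fps_X * x)" using assms by (rule l2_X)
  have "nr (fps_const p * x + fps_const q * (fps_X * x))
      = nr (fps_const p * x) + 2 * ip (fps_const p * x) (fps_const q * (fps_X * x)) + nr (fps_const q * (fps_X * x))"
    using assms l by (intro nr_add l2_cmult)
  also have "ip (fps_const p * x) (fps_const q * (fps_X * x)) = p * q * ip x (fps_X * x)"
    using assms l
    by (simp add: ip_cmult l2_cmult, subst ip_comm, simp add: ip_cmult, subst ip_comm, simp)
  also have "nr (fps_const p * x) = p^2 * nr x" by (rule nr_cmult[OF assms])
  also have "nr (fps_const q * (fps_X * x)) = q^2 * nr x" using nr_cmult[OF l] nr_X[OF assms] by simp
  finally have calc: "nr (fps_const p * x + fps_const q * (fps_X * x)) = p\<^sup>2 * nr x + 2 * (p * q * ip x (fps_X * x)) + q\<^sup>2 * nr x" .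
  show ?thesis by (subst e, rule trans[OF calc]) (simp add: algebra_simps)
qed

lemma core:
  fixes \<alpha> \<beta> :: real
  assumes y: "l2 y" and ab: "0 \<le> \<alpha>" "\<alpha> \<le> 1" "0 \<le> \<beta>" "\<beta> \<le> 1" "\<alpha>*\<beta> < 1"
  defines "x \<equiv> inverse (1 + fps_const (\<alpha>*\<beta>) * fps_X) * y"
  defines "z \<equiv> (fps_const \<alpha> + fps_const \<beta> * fps_X) * x"
  shows "l2 x" "l2 z" "nr z = nr y - (1-\<alpha>^2)*(1-\<beta>^2) * nr x" "nr y \<le> (1+\<alpha>*\<beta>)^2 * nr x"
proof -
  show lx: "l2 x" unfolding x_def using y ab by (intro l2_Q) auto
  show "l2 z" unfolding z_def using lx 
    by (simp add: distrib_right mult.assoc l2_add l2_cmult l2_X)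
  have inv: "(1 + fps_const (\<alpha>*\<beta>) * fps_X) * inverse (1 + fps_const (\<alpha>*\<beta>) * fps_X) = (1::real fps)"
    by (rule inverse_mult_eq_1') simp
  have ye: "y = (fps_const 1 + fps_const (\<alpha>*\<beta>) * fps_X) * x"
    unfolding x_def by (simp add: mult.assoc[symmetric] inv)
  have ny: "nr y = (1 + (\<alpha>*\<beta>)^2) * nr x + 2*(\<alpha>*\<beta>) * ip x (fps_X * x)"
    by (subst ye, subst nr_lin[OF lx]) simp
  have nz: "nr z = (\<alpha>^2 + \<beta>^2) * nr x + 2*(\<alpha>*\<beta>) * ip x (fps_X * x)"
    unfolding z_def by (rule nr_lin[OF lx])
  show "nr z = nr y - (1-\<alpha>^2)*(1-\<beta>^2) * nr x"
    using ny nz by (simp add: algebra_simps power_mult_distrib)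
  have "2 * ip x (fps_X * x) \<le> nr x + nr (fps_X * x)" using lx l2_X[OF lx] by (rule ip_bound)
  then have "ip x (fps_X * x) \<le> nr x" using nr_X[OF lx] by simp
  then have "2*(\<alpha>*\<beta>) * ip x (fps_X * x) \<le> 2*(\<alpha>*\<beta>) * nr x"
    using ab by (intro mult_left_mono) auto
  then show "nr y \<le> (1+\<alpha>*\<beta>)^2 * nr x" using ny by (simp add: algebra_simps power2_eq_square)
qed


definition Tf :: "real \<Rightarrow> real fps" where
  "Tf a = (fps_const a + fps_X) * inverse (1 + fps_const a * fps_X)"

definition Tr :: "real \<Rightarrow> real \<Rightarrow> real fps" where
  "Tr a r = (fps_const a + fps_const r * fps_X) * inverse (1 + fps_const (a*r) * fps_X)"

lemma Tf_Tr: "Tf a = Tr a 1"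
  unfolding Tf_def Tr_def by simp

lemma Tr_step:
  assumes y: "l2 y" and a: "0 < a" "a < 1" and r: "0 < r" "r \<le> 1"
  shows "l2 (Tr a r * y)" "nr (Tr a r * y) \<le> (1 - (1-a^2)*(1-r^2)/(1+a*r)^2) * nr y"
    "r = 1 \<Longrightarrow> nr (Tr a r * y) = nr y"
proof -
  have "a*r \<le> a" using a r by (simp add: mult_left_le)
  then have ar: "a*r < 1" using a by linarith
  note c = core[OF y, of a r]
  have e: "Tr a r * y = (fps_const a + fps_const r * fps_X) * (inverse (1 + fps_const (a*r) * fps_X) * y)"
    unfolding Tr_def by (simp add: mult.assoc)
  show "l2 (Tr a r * y)" unfolding e using c a r ar by auto
  show "r = 1 \<Longrightarrow> nr (Tr a r * y) = nr y" unfolding e using c a r ar by auto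
  define x where "x = inverse (1 + fps_const (a*r) * fps_X) * y"
  have nz: "nr (Tr a r * y) = nr y - (1-a^2)*(1-r^2) * nr x"
    and ny: "nr y \<le> (1+a*r)^2 * nr x" unfolding e x_def using c a r ar by auto
  have pos: "0 \<le> (1-a^2)*(1-r^2)"
    using a r by (intro mult_nonneg_nonneg) (auto simp: power_le_one abs_le_square_iff)
  have p: "0 < (1+a*r)^2" proof -
    have "0 < a*r" using a r by simp
    then have "0 < 1 + a*r" by linarith
    then show ?thesis by simp
  qed
  have "nr y / (1+a*r)^2 \<le> nr x" using ny p by (simp add: pos_divide_le_eq mult.commute)
  then have "(1-a^2)*(1-r^2) * (nr y / (1+a*r)^2) \<le> (1-a^2)*(1-r^2) * nr x"
    using pos by (rule mult_left_mono)
  then show "nr (Tr a r * y) \<le> (1 - (1-a^2)*(1-r^2)/(1+a*r)^2) * nr y"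
  proof -
    have gen: "(1 - P/D) * N = N - P * (N/D)" for P D N :: real
      by (simp add: left_diff_distrib)
    have "(1 - (1-a^2)*(1-r^2)/(1+a*r)^2) * nr y = nr y - (1-a^2)*(1-r^2) * (nr y / (1+a*r)^2)"
      by (rule gen)
    then show ?thesis using nz \<open>(1-a^2)*(1-r^2) * (nr y / (1+a*r)^2) \<le> (1-a^2)*(1-r^2) * nr x\<close> by linarith
  qed
qed

lemma Tf_pow:
  assumes y: "l2 y" and a: "0 < a" "a < 1"
  shows "l2 (Tf a ^ j * y) \<and> nr (Tf a ^ j * y) = nr y"
proof (induction j)
  case 0 then show ?case using y by simp
next
  case (Suc j)
  have e: "Tf a ^ Suc j * y = Tr a 1 * (Tf a ^ j * y)" by (simp add: Tf_Tr mult.assoc)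
  show ?case unfolding e using Tr_step[of "Tf a ^ j * y" a 1] Suc a by auto
qed

lemma Tr_pow:
  assumes y: "l2 y" and a: "0 < a" "a < 1" and r: "0 < r" "r \<le> 1"
  shows "l2 (Tr a r ^ j * y) \<and> nr (Tr a r ^ j * y) \<le> (1 - (1-a^2)*(1-r^2)/(1+a*r)^2)^j * nr y"
proof (induction j)
  case 0 then show ?case using y by simp
next
  case (Suc j)
  define \<rho> where "\<rho> = 1 - (1-a^2)*(1-r^2)/(1+a*r)^2"
  have rho0: "0 \<le> \<rho>"
  proof -
    have "(1-a^2)*(1-r^2) \<le> (1+a*r)^2"
    proof -
      have "(1-a^2)*(1-r^2) = (1+a*r)^2 - (a+r)^2" by (simp add: algebra_simps power2_eq_square)
      then show ?thesis by simp
    qed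
    moreover have "0 < (1+a*r)^2" proof -
    have "0 < a*r" using a r by simp
    then have "0 < 1 + a*r" by linarith
    then show ?thesis by simp
  qed
    ultimately show ?thesis unfolding \<rho>_def by (simp add: divide_le_eq_1)
  qed
  have e: "Tr a r ^ Suc j * y = Tr a r * (Tr a r ^ j * y)" by (simp add: mult.assoc)
  have "nr (Tr a r * (Tr a r ^ j * y)) \<le> \<rho> * nr (Tr a r ^ j * y)"
    using Tr_step[of "Tr a r ^ j * y" a r] Suc a r unfolding \<rho>_def by auto
  also have "\<dots> \<le> \<rho> * (\<rho>^j * nr y)" using Suc rho0 unfolding \<rho>_def by (intro mult_left_mono) auto
  finally show ?case unfolding e using Tr_step[of "Tr a r ^ j * y" a r] Suc a r unfolding \<rho>_def
    by (auto simp: mult.assoc)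
qed

lemma Tf_pow_ip:
  assumes x: "l2 x" and y: "l2 y" and a: "0 < a" "a < 1"
  shows "ip (Tf a ^ j * x) (Tf a ^ j * y) = ip x y"
proof -
  note px = Tf_pow[OF x a, of j] and py = Tf_pow[OF y a, of j]
  have lxy: "l2 (x + y)" using x y by (rule l2_add)
  note pxy = Tf_pow[OF lxy a, of j]
  have "nr (Tf a ^ j * (x + y)) = nr (Tf a ^ j * x) + 2 * ip (Tf a ^ j * x) (Tf a ^ j * y) + nr (Tf a ^ j * y)"
    using px py by (simp add: distrib_left nr_add)
  moreover have "nr (x + y) = nr x + 2 * ip x y + nr y" using x y by (rule nr_add)
  ultimately show ?thesis using px py pxy by simp
qed


inductive_set GG :: "real \<Rightarrow> real fps set" for a where
  GX: "fps_X \<in> GG a"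
| Gc: "fps_const c \<in> GG a"
| GQ: "inverse (1 + fps_const a * fps_X) \<in> GG a"
| Gadd: "f \<in> GG a \<Longrightarrow> g \<in> GG a \<Longrightarrow> f + g \<in> GG a"
| Gmult: "f \<in> GG a \<Longrightarrow> g \<in> GG a \<Longrightarrow> f * g \<in> GG a"

lemma Gdiff: "f \<in> GG a \<Longrightarrow> g \<in> GG a \<Longrightarrow> f - g \<in> GG a"
proof -
  assume "f \<in> GG a" "g \<in> GG a"
  then have "f + fps_const (-1) * g \<in> GG a" by (intro Gadd Gmult Gc)
  moreover have "fps_const (-1::real) * g = - g" by (simp only: fps_const_neg [symmetric] fps_const_1_eq_1) simp
  ultimately show ?thesis by simp
qed

lemma G_mult: assumes a: "0 < a" "a < 1" and f: "f \<in> GG a" shows "l2 y \<Longrightarrow> l2 (f * y)"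
  using f
proof (induction arbitrary: y)
  case GX then show ?case by (rule l2_X)
next
  case (Gc c) then show ?case by (rule l2_cmult)
next
  case GQ then show ?case using a by (intro l2_Q) auto
next
  case (Gadd f g) then show ?case by (simp add: distrib_right l2_add)
next
  case (Gmult f g) then show ?case by (simp add: mult.assoc)
qed

lemma G_l2: assumes a: "0 < a" "a < 1" and f: "f \<in> GG a" shows "l2 f"
  using G_mult[OF a f l2_one] by simp

lemma G_deriv: assumes f: "f \<in> GG a" shows "fps_deriv f \<in> GG a"
  using f
proof induction
  case GX
  show ?case using GG.Gc[of 1 a] by simp
next
  case (Gc c)
  show ?case using GG.Gc[of 0 a] by simp
next
  case GQ
  have "fps_deriv (inverse (1 + fps_const a * fps_X)) = fps_const (-a) * (inverse (1 + fps_const a * fps_X) * inverse (1 + fps_const (a::real) * fps_X))"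
    by (subst fps_inverse_deriv) (simp_all add: power2_eq_square)
  then show ?case using GG.Gmult[OF GG.Gc[of "-a"] GG.Gmult[OF GG.GQ GG.GQ]] by (simp only:)
next
  case (Gadd f g) then show ?case by (simp add: GG.Gadd)
next
  case (Gmult f g) then show ?case by (simp add: fps_deriv_mult GG.Gadd GG.Gmult)
qed

definition NN :: "real fps \<Rightarrow> real fps" where "NN f = fps_X * fps_deriv f"

lemma NN_nth: "fps_nth (NN f) n = of_nat n * fps_nth f n"
  unfolding NN_def by (cases n) (simp_all add: fps_deriv_nth del: of_nat_Suc) 

lemma G_NN: "f \<in> GG a \<Longrightarrow> NN f \<in> GG a"
  unfolding NN_def by (intro Gmult GX G_deriv)

lemma Tf_G: "Tf a \<in> GG a"
  unfolding Tf_def by (intro Gmult Gadd Gc GX GQ)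

definition uu :: "real \<Rightarrow> real fps" where "uu a = NN (Tf a) - Tf a"

lemma uu_G: "uu a \<in> GG a"
  unfolding uu_def by (intro Gdiff G_NN Tf_G)

lemma NN_mult: "NN (f * g) = NN f * g + f * NN g"
  unfolding NN_def by (simp add: fps_deriv_mult algebra_simps)

lemma NN_pow: "NN (f ^ Suc j) = fps_const (of_nat (Suc j)) * f ^ j * NN f"
  unfolding NN_def by (simp add: fps_deriv_power algebra_simps del: power_Suc of_nat_Suc)

lemma e1_eq: "NN (Tf a ^ Suc j) - fps_const (of_nat (Suc j)) * Tf a ^ Suc j
    = fps_const (of_nat (Suc j)) * (Tf a ^ j * uu a)"
  unfolding NN_pow uu_def by (simp add: algebra_simps del: of_nat_Suc)

lemma fc_Suc: "fps_const (of_nat (Suc k) :: real) = fps_const (of_nat k) + 1"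
proof -
  have "fps_const (of_nat k + 1::real) = fps_const (of_nat k) + fps_const 1" by (rule fps_const_add[symmetric])
  then show ?thesis by simp
qed

lemma ring_aux: fixes c P TT U V x :: "'a::comm_ring_1"
  assumes "x = c * P * (U + TT) * U + P * TT * V"
  shows "x - (c + 1) * (P * TT * U) = c * (P * (U * U)) + P * TT * (V - U)"
  using assms by (simp add: algebra_simps)

lemma e2_eq: "NN (Tf a ^ Suc i * uu a) - fps_const (of_nat (Suc (Suc i))) * (Tf a ^ Suc i * uu a)
   = fps_const (of_nat (Suc i)) * (Tf a ^ i * (uu a * uu a)) + Tf a ^ Suc i * (NN (uu a) - uu a)"
proof -
  have "NN (Tf a ^ Suc i * uu a) = fps_const (of_nat (Suc i)) * Tf a ^ i * NN (Tf a) * uu a + Tf a ^ Suc i * NN (uu a)"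
    by (simp only: NN_mult NN_pow)
  also have "NN (Tf a) = uu a + Tf a" unfolding uu_def by simp
  finally have h: "NN (Tf a ^ Suc i * uu a) = fps_const (of_nat (Suc i)) * Tf a ^ i * (uu a + Tf a) * uu a + Tf a ^ i * Tf a * NN (uu a)"
    by (simp only: power_Suc2)
  show ?thesis
    unfolding fc_Suc[of "Suc i"] power_Suc2 by (rule ring_aux[OF h[unfolded power_Suc2]])
qed


lemma moment:
  fixes p :: "nat \<Rightarrow> real" and m :: nat and A B :: real
  assumes p0: "\<And>n. 0 \<le> p n" and m: "0 < m" and A: "0 < A" and B: "0 \<le> B"
  and s1: "(\<lambda>n. (real n - real m) * p n) sums 0"
  and s2: "summable (\<lambda>n. (real n - real m)^2 * p n)" "A * m^2 \<le> (\<Sum>n. (real n - real m)^2 * p n)"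
  and s4: "summable (\<lambda>n. (real n - real m)^4 * p n)" "(\<Sum>n. (real n - real m)^4 * p n) \<le> B * m^4"
  shows "A * m / (2*(2 + 2*B/A)) \<le> (\<Sum>n<m. (real m - real n) * p n)"
proof -
  define \<Lambda> where "\<Lambda> = 2*B/A + 1"
  have L1: "1 \<le> \<Lambda>" unfolding \<Lambda>_def using A B by simp
  define H where "H = \<Lambda> * m"
  have H0: "0 < H" unfolding H_def using L1 m by simp
  define D where "D = (\<Sum>n<m. (real m - real n) * p n)"
  define L where "L n = (if n < m then (real m - real n) * p n else 0)" for n
  define R where "R n = (real n - real m) * p n + L n" for n
  have Ls: "L sums D"
  proof -
    have "L sums (\<Sum>n\<in>{..<m}. L n)" by (rule sums_finite) (auto simp: L_def)
    moreover have "(\<Sum>n\<in>{..<m}. L n) = D" unfolding D_def L_def by simp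
    ultimately show ?thesis by simp
  qed
  have Rs: "R sums D" unfolding R_def using sums_add[OF s1 Ls] by simp
  define x where "x n = real n - real m" for n
  have pw: "(x n)^2 * p n \<le> m * L n + H * R n + (x n)^4 * p n / H^2" for n
  proof (cases "n < m")
    case True
    have "(x n)^2 \<le> m * (real m - real n)"
      unfolding x_def using True by (simp add: power2_eq_square algebra_simps mult_right_mono)
    then have "(x n)^2 * p n \<le> m * ((real m - real n) * p n)"
      using p0[of n] by (simp add: mult_right_mono mult.assoc[symmetric])
    moreover have "R n = 0" unfolding R_def L_def using True by (simp add: algebra_simps)
    moreover have "0 \<le> (x n)^4 * p n / H^2" using p0[of n] by simp
    ultimately show ?thesis unfolding L_def using True by simp
  next
    case False
    then have x0: "0 \<le> x n" unfolding x_def by simp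
    have Ln: "L n = 0" "R n = x n * p n" unfolding R_def L_def x_def using False by auto
    have "(x n)^2 \<le> H * x n + (x n)^4 / H^2"
    proof (cases "x n \<le> H")
      case True
      then have "(x n)^2 \<le> H * x n" using x0 by (simp add: power2_eq_square mult_right_mono)
      moreover have "0 \<le> (x n)^4 / H^2" by simp
      ultimately show ?thesis by linarith
    next
      case False
      then have "H^2 \<le> (x n)^2" using H0 by (intro power_mono) auto
      then have "(x n)^2 * H^2 \<le> (x n)^2 * (x n)^2" by (intro mult_left_mono) auto
      then have "(x n)^2 \<le> (x n)^4 / H^2" using H0 by (simp add: field_simps power4_eq_xxxx power2_eq_square)
      moreover have "0 \<le> H * x n" using H0 x0 by simp
      ultimately show ?thesis by linarith
    qed
    then have "(x n)^2 * p n \<le> (H * x n + (x n)^4 / H^2) * p n" using p0[of n] by (rule mult_right_mono)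
    then show ?thesis using Ln by (simp add: algebra_simps)
  qed
  have "(\<Sum>n. (x n)^2 * p n) \<le> (\<Sum>n. m * L n + H * R n + (x n)^4 * p n / H^2)"
    using pw s2(1) Ls Rs s4(1) unfolding x_def
    by (intro suminf_le summable_add summable_mult summable_divide) (auto simp: sums_iff)
  also have "\<dots> = m * D + H * D + (\<Sum>n. (x n)^4 * p n) / H^2"
  proof -
    have "(\<lambda>n. m * L n + H * R n + (x n)^4 * p n / H^2) sums (m * D + H * D + (\<Sum>n. (x n)^4 * p n) / H^2)"
      using s4(1) unfolding x_def
      by (intro sums_add sums_mult Ls Rs sums_divide summable_sums)
    then show ?thesis by (simp add: sums_iff)
  qed
  also have "(\<Sum>n. (x n)^4 * p n) / H^2 \<le> B * m^4 / H^2"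
    using s4(2) H0 unfolding x_def by (simp add: divide_right_mono)
  also have "B * m^4 / H^2 \<le> A/2 * m^2"
  proof -
    have "B \<le> A/2 * \<Lambda>" unfolding \<Lambda>_def using A by (simp add: field_simps)
    also have "\<dots> \<le> A/2 * \<Lambda>^2" using L1 A by (simp add: power2_eq_square)
    finally have BL: "B \<le> A/2 * \<Lambda>^2" .
    have "B * m^2 \<le> A/2 * \<Lambda>^2 * m^2" by (rule mult_right_mono[OF BL]) simp
    then have X: "B * m^2 * m^2 \<le> A/2 * \<Lambda>^2 * m^2 * m^2" by (rule mult_right_mono) simp
    have eq1: "B * m^4 = B * m^2 * m^2" by (simp add: power4_eq_xxxx power2_eq_square)
    have eq2: "A/2 * m^2 * H^2 = A/2 * \<Lambda>^2 * m^2 * m^2" unfolding H_def by (simp add: power_mult_distrib)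
    have "B * m^4 \<le> A/2 * m^2 * H^2" using X by (simp only: eq1 eq2)
    then show ?thesis using H0 by (simp add: divide_le_eq)
  qed
  finally have "A * m^2 \<le> m * D + H * D + A/2 * m^2" using s2(2) unfolding x_def by linarith
  then have "A/2 * m^2 \<le> (1 + \<Lambda>) * m * D" unfolding H_def by (simp add: algebra_simps)
  then have "A/2 * m \<le> (1 + \<Lambda>) * D" using m by (simp add: power2_eq_square)
  then have "A * m / (2*(1+\<Lambda>)) \<le> D" using L1 by (simp add: field_simps)
  moreover have "1 + \<Lambda> = 2 + 2*B/A" unfolding \<Lambda>_def by simp
  ultimately show ?thesis unfolding D_def by simp
qed


lemma Q_expand: "inverse (1 + fps_const a * fps_X) = Abs_fps (\<lambda>n. (-a)^n :: real)"
proof (rule fps_inverse_unique)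
  show "(1 + fps_const a * fps_X) * Abs_fps (\<lambda>n. (- a) ^ n) = 1"
  proof (rule fps_ext)
    fix n
    show "fps_nth ((1 + fps_const a * fps_X) * Abs_fps (\<lambda>n. (- a) ^ n)) n = fps_nth (1::real fps) n"
      by (cases n) (simp_all add: distrib_right mult.assoc del: fps_X_mult_nth,
                    simp_all add: fps_X_mult_nth)
  qed
qed

lemma Tf_nth0: "fps_nth (Tf a) 0 = a"
  unfolding Tf_def Q_expand by simp

lemma Tf_nthS: "fps_nth (Tf a) (Suc k) = (-a)^k * (1 - a^2)"
  unfolding Tf_def Q_expand by (simp add: distrib_right algebra_simps power2_eq_square)

lemma uu_nth: "fps_nth (uu a) n = (real n - 1) * fps_nth (Tf a) n"
  unfolding uu_def by (simp add: NN_nth algebra_simps)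

lemma ip_uu_Tf: assumes a: "0 < a" "a < 1" shows "ip (uu a) (Tf a) = 0"
proof -
  define x where "x = a^2"
  have x: "0 \<le> x" "x < 1" unfolding x_def using a by (simp_all add: power_less_one_iff abs_less_iff)
  have s1: "(\<lambda>k. real (Suc k) * x^k) sums (1 / (1-x)^2)" using geometric_deriv_sums[of x] x by simp
  have s2: "(\<lambda>k. x^k) sums (1 / (1-x))" using geometric_sums[of x] x by simp
  have s3: "(\<lambda>k. real k * x^k) sums (1/(1-x)^2 - 1/(1-x))"
    using sums_diff[OF s1 s2] by (simp add: algebra_simps)
  have s4: "(\<lambda>k. (1-x)^2 * (real k * x^k)) sums ((1-x)^2 * (1/(1-x)^2 - 1/(1-x)))"
    by (rule sums_mult[OF s3])
  have v: "(1-x)^2 * (1/(1-x)^2 - 1/(1-x)) = x"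
  proof -
    have nz: "1 - x \<noteq> 0" using x by simp
    have "(1-x)^2 * (1/(1-x)^2 - 1/(1-x)) = (1-x)^2 * (1/(1-x)^2) - (1-x)^2 * (1/(1-x))"
      by (rule right_diff_distrib)
    also have "\<dots> = 1 - (1-x)" using nz by (simp add: power2_eq_square)
    finally show ?thesis by simp
  qed
  have e: "fps_nth (uu a) (Suc k) * fps_nth (Tf a) (Suc k) = (1-x)^2 * (real k * x^k)" for k
  proof -
    have sq: "((-a)^k)^2 = (a^2)^k" by (metis power2_minus power_mult mult.commute)
    have "fps_nth (uu a) (Suc k) * fps_nth (Tf a) (Suc k) = real k * ((-a)^k * (1-a^2))^2"
      unfolding uu_nth Tf_nthS by (simp add: power2_eq_square)
    also have "((-a)^k * (1-a^2))^2 = ((-a)^k)^2 * (1-a^2)^2" by (rule power_mult_distrib)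
    finally show ?thesis unfolding sq x_def by simp
  qed
  have "(\<lambda>k. fps_nth (uu a) (Suc k) * fps_nth (Tf a) (Suc k)) sums x"
    using s4 unfolding e v .
  then have "(\<lambda>n. fps_nth (uu a) n * fps_nth (Tf a) n) sums (x + fps_nth (uu a) 0 * fps_nth (Tf a) 0)"
    by (subst sums_Suc_iff[symmetric])
  moreover have "x + fps_nth (uu a) 0 * fps_nth (Tf a) 0 = 0"
    unfolding uu_nth Tf_nth0 x_def by (simp add: power2_eq_square)
  ultimately show ?thesis unfolding ip_def by (simp add: sums_iff)
qed

lemma nr_ge0: "l2 f \<Longrightarrow> (fps_nth f 0)^2 \<le> nr f"
  unfolding nr_def l2_def using sum_le_suminf[of "\<lambda>n. (fps_nth f n)^2" "{..<1}"] by auto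

lemma nr_one: "nr 1 = 1"
proof -
  have "(\<lambda>n. (fps_nth (1::real fps) n)^2) sums (\<Sum>n\<in>{0}. (fps_nth (1::real fps) n)^2)"
    by (rule sums_finite) auto
  then show ?thesis unfolding nr_def by (simp add: sums_iff)
qed

lemma nr_sum2: assumes "l2 f" "l2 g" shows "nr (f + g) \<le> 2 * nr f + 2 * nr g"
  using nr_add[OF assms] ip_bound[OF assms] by linarith

lemma NN_cmult: "NN (fps_const c * f) = fps_const c * NN f"
  unfolding NN_def by (simp add: algebra_simps)


lemma mass: assumes a: "0 < a" "a < 1"
  shows "\<exists>\<delta>>0. \<forall>m\<ge>2. \<delta> * real m \<le> (\<Sum>n<m. (real m - real n) * (fps_nth (Tf a ^ m) n)^2)"
proof -
  define v where "v = uu a * uu a"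
  define w where "w = NN (uu a) - uu a"
  have lu: "l2 (uu a)" using G_l2[OF a uu_G] .
  have lv: "l2 v" unfolding v_def using G_l2[OF a Gmult[OF uu_G uu_G]] .
  have lw: "l2 w" unfolding w_def using G_l2[OF a Gdiff[OF G_NN[OF uu_G] uu_G]] .
  have lT: "l2 (Tf a)" using G_l2[OF a Tf_G] .
  define A where "A = a^2"
  define B where "B = 2 * (nr v + nr w)"
  have A0: "0 < A" unfolding A_def using a by simp
  have B0: "0 \<le> B" unfolding B_def using nr_nonneg[OF lv] nr_nonneg[OF lw] by simp
  define \<delta> where "\<delta> = A * 1 / (2*(2 + 2*B/A))"
  have d0: "0 < \<delta>" unfolding \<delta>_def using A0 B0 by (simp add: add_pos_nonneg)
  have nru: "A \<le> nr (uu a)"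
  proof -
    have "fps_nth (uu a) 0 = - a" unfolding uu_nth Tf_nth0 by simp
    then show ?thesis using nr_ge0[OF lu] unfolding A_def by simp
  qed
  have main: "\<delta> * real m \<le> (\<Sum>n<m. (real m - real n) * (fps_nth (Tf a ^ m) n)^2)" if m2: "2 \<le> m" for m
  proof -
    obtain i where m: "m = Suc (Suc i)" using m2 by (metis add_2_eq_Suc le_Suc_ex)
    define c where "c = Tf a ^ m"
    have lc: "l2 c" unfolding c_def using Tf_pow[OF l2_one a, of m] by simp
    define W where "W = Tf a ^ Suc i * uu a"
    have lW: "l2 W" and nW: "nr W = nr (uu a)" unfolding W_def using Tf_pow[OF lu a, of "Suc i"] by auto
    define e1 where "e1 = NN c - fps_const (real m) * c"
    have e1W: "e1 = fps_const (real m) * W"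
      unfolding e1_def c_def W_def m using e1_eq[of a "Suc i"] by simp
    have e1n: "fps_nth e1 n = (real n - real m) * fps_nth c n" for n
      unfolding e1_def by (simp add: NN_nth algebra_simps)
    define V where "V = fps_const (real (Suc i)) * (Tf a ^ i * v) + Tf a ^ Suc i * w"
    have lV1: "l2 (Tf a ^ i * v)" and nV1: "nr (Tf a ^ i * v) = nr v" using Tf_pow[OF lv a, of i] by auto
    have lV2: "l2 (Tf a ^ Suc i * w)" and nV2: "nr (Tf a ^ Suc i * w) = nr w" using Tf_pow[OF lw a, of "Suc i"] by auto
    have lV: "l2 V" unfolding V_def using lV1 lV2 by (intro l2_add l2_cmult)
    define e2 where "e2 = NN e1 - fps_const (real m) * e1"
    have e2V: "e2 = fps_const (real m) * V"
    proof -
      have "e2 = fps_const (real m) * (NN W - fps_const (real m) * W)"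
        unfolding e2_def e1W NN_cmult by (simp add: algebra_simps)
      also have "NN W - fps_const (real m) * W = V"
        unfolding W_def V_def v_def w_def m using e2_eq[of a i] by simp
      finally show ?thesis .
    qed
    have e2n: "fps_nth e2 n = (real n - real m)^2 * fps_nth c n" for n
      unfolding e2_def by (simp add: NN_nth e1n algebra_simps power2_eq_square)
    have le1: "l2 e1" unfolding e1W using lW by (rule l2_cmult)
    have le2: "l2 e2" unfolding e2V using lV by (rule l2_cmult)
    define p where "p n = (fps_nth c n)^2" for n
    have p0: "0 \<le> p n" for n unfolding p_def by simp
    have f1: "(\<lambda>n. (real n - real m) * p n) = (\<lambda>n. fps_nth e1 n * fps_nth c n)"
      unfolding p_def e1n by (simp add: power2_eq_square mult.assoc)
    have f2: "(\<lambda>n. (real n - real m)^2 * p n) = (\<lambda>n. (fps_nth e1 n)^2)"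
      unfolding p_def e1n by (simp add: power_mult_distrib)
    have f4: "(\<lambda>n. (real n - real m)^4 * p n) = (\<lambda>n. (fps_nth e2 n)^2)"
      unfolding p_def e2n by (simp add: power_mult_distrib flip: power_mult)
    have s1: "(\<lambda>n. (real n - real m) * p n) sums 0"
    proof -
      have ceq: "c = Tf a ^ Suc i * Tf a" unfolding c_def m by (simp only: power_Suc2)
      have "ip e1 c = real m * ip W c" unfolding e1W using lW lc by (rule ip_cmult)
      also have "ip W c = ip (uu a) (Tf a)"
        unfolding ceq
        unfolding W_def by (rule Tf_pow_ip[OF lu lT a])
      also have "\<dots> = 0" by (rule ip_uu_Tf[OF a])
      finally have "ip e1 c = 0" by simp
      then show ?thesis unfolding f1 using l2_prod_summable[OF le1 lc] unfolding ip_def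
        by (metis summable_sums)
    qed
    have s2a: "summable (\<lambda>n. (real n - real m)^2 * p n)" unfolding f2 using le1 unfolding l2_def .
    have s2b: "A * (real m)^2 \<le> (\<Sum>n. (real n - real m)^2 * p n)"
    proof -
      have "(\<Sum>n. (real n - real m)^2 * p n) = nr e1" unfolding f2 nr_def ..
      also have "nr e1 = (real m)^2 * nr (uu a)" unfolding e1W nr_cmult[OF lW] nW ..
      finally have "(\<Sum>n. (real n - real m)^2 * p n) = (real m)^2 * nr (uu a)" .
      moreover have "A * (real m)^2 \<le> nr (uu a) * (real m)^2" using nru by (rule mult_right_mono) simp
      ultimately show ?thesis by (simp add: mult.commute)
    qed
    have s4a: "summable (\<lambda>n. (real n - real m)^4 * p n)" unfolding f4 using le2 unfolding l2_def .
    have s4b: "(\<Sum>n. (real n - real m)^4 * p n) \<le> B * (real m)^4"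
    proof -
      have E1: "(\<Sum>n. (real n - real m)^4 * p n) = nr e2" unfolding f4 nr_def ..
      have E2: "nr e2 = (real m)^2 * nr V" unfolding e2V nr_cmult[OF lV] ..
      have V1: "nr V \<le> 2 * nr (fps_const (real (Suc i)) * (Tf a ^ i * v)) + 2 * nr (Tf a ^ Suc i * w)"
        unfolding V_def using lV1 lV2 by (intro nr_sum2 l2_cmult)
      have V2: "nr (fps_const (real (Suc i)) * (Tf a ^ i * v)) = (real (Suc i))^2 * nr v"
        using nr_cmult[OF lV1] nV1 by simp
      have V3: "2 * ((real (Suc i))^2 * nr v) + 2 * nr (Tf a ^ Suc i * w) \<le> (real m)^2 * B"
      proof -
        have "(real (Suc i))^2 \<le> (real m)^2" unfolding m by (simp add: power_mono)
        then have "(real (Suc i))^2 * nr v \<le> (real m)^2 * nr v" using nr_nonneg[OF lv] by (rule mult_right_mono)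
        moreover have "nr w \<le> (real m)^2 * nr w"
        proof -
          have "1 \<le> (real m)^2" unfolding m by simp
          then have "1 * nr w \<le> (real m)^2 * nr w" using nr_nonneg[OF lw] by (rule mult_right_mono)
          then show ?thesis by simp
        qed
        ultimately show ?thesis unfolding nV2 B_def by (simp add: algebra_simps)
      qed
      have X: "nr V \<le> (real m)^2 * B" using V1 V2 V3 by linarith
      have "(real m)^2 * nr V \<le> (real m)^2 * ((real m)^2 * B)" using X by (rule mult_left_mono) simp
      also have "(real m)^2 * ((real m)^2 * B) = B * (real m)^4" by (simp add: power4_eq_xxxx power2_eq_square)
      finally show ?thesis using E1 E2 by simp
    qed
    have mpos: "0 < m" using m by simp
    have s2b': "A * real (m^2) \<le> (\<Sum>n. (real n - real m)^2 * p n)" using s2b by simp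
    have s4b': "(\<Sum>n. (real n - real m)^4 * p n) \<le> B * real (m^4)" using s4b by simp
    have "A * real m / (2*(2 + 2*B/A)) \<le> (\<Sum>n<m. (real m - real n) * p n)"
      by (rule moment[OF p0 mpos A0 B0 s1 s2a s2b' s4a s4b'])
    then show ?thesis unfolding \<delta>_def p_def c_def by simp
  qed
  show ?thesis using d0 main by blast
qed


definition sc :: "real \<Rightarrow> real fps \<Rightarrow> real fps" where
  "sc r f = Abs_fps (\<lambda>n. r^n * fps_nth f n)"

lemma sc_nth: "fps_nth (sc r f) n = r^n * fps_nth f n"
  unfolding sc_def by simp

lemma sc_mult: "sc r (f * g) = sc r f * sc r g"
proof (rule fps_ext)
  fix n
  have "fps_nth (sc r (f * g)) n = (\<Sum>i=0..n. r^n * (fps_nth f i * fps_nth g (n - i)))"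
    by (simp add: sc_nth fps_mult_nth sum_distrib_left)
  also have "\<dots> = (\<Sum>i=0..n. (r^i * fps_nth f i) * (r^(n-i) * fps_nth g (n - i)))"
  proof (rule sum.cong)
    fix i assume "i \<in> {0..n}"
    then have "r^n = r^i * r^(n-i)" by (simp add: power_add[symmetric])
    then show "r^n * (fps_nth f i * fps_nth g (n - i)) = (r^i * fps_nth f i) * (r^(n-i) * fps_nth g (n - i))"
      by (simp add: algebra_simps)
  qed simp
  also have "\<dots> = fps_nth (sc r f * sc r g) n" by (simp add: sc_nth fps_mult_nth)
  finally show "fps_nth (sc r (f * g)) n = fps_nth (sc r f * sc r g) n" .
qed

lemma sc_add: "sc r (f + g) = sc r f + sc r g"
  by (rule fps_ext) (simp add: sc_nth algebra_simps)

lemma sc_const: "sc r (fps_const c) = fps_const c"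
  by (rule fps_ext) (simp add: sc_nth)

lemma sc_one: "sc r 1 = 1"
  by (rule fps_ext) (simp add: sc_nth)

lemma sc_X: "sc r fps_X = fps_const r * fps_X"
  by (rule fps_ext) (simp add: sc_nth fps_X_def)

lemma sc_inverse: assumes "fps_nth f 0 \<noteq> 0" shows "sc r (inverse f) = inverse (sc r f)"
proof -
  have "sc r f * sc r (inverse f) = 1"
    using assms by (simp add: sc_mult[symmetric] inverse_mult_eq_1' sc_one)
  then show ?thesis by (rule fps_inverse_unique[symmetric])
qed

lemma sc_power: "sc r (f ^ m) = sc r f ^ m"
  by (induction m) (simp_all add: sc_one sc_mult)

lemma sc_Tf: "sc r (Tf a) = Tr a r"
  unfolding Tf_def Tr_def
  by (simp add: sc_mult sc_add sc_const sc_X sc_inverse sc_one mult.assoc[symmetric])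

lemma rho_nonneg: fixes a r :: real assumes a: "0 < a" "a < 1" and r: "0 < r" "r \<le> 1"
  shows "0 \<le> 1 - (1-a^2)*(1-r^2)/(1+a*r)^2"
proof -
  have "(1-a^2)*(1-r^2) = (1+a*r)^2 - (a+r)^2" unfolding power2_eq_square by algebra
  then have "(1-a^2)*(1-r^2) \<le> (1+a*r)^2" by simp
  moreover have "0 < (1+a*r)^2"
  proof -
    have "0 < a*r" using a r by simp
    then have "0 < 1 + a*r" by linarith
    then show ?thesis by simp
  qed
  ultimately show ?thesis by (simp add: divide_le_eq_1)
qed

lemma lowmass: fixes a r :: real
  assumes a: "0 < a" "a < 1" and r: "0 < r" "r \<le> 1"
  shows "r^(2*L) * (\<Sum>n\<le>L. (fps_nth (Tf a ^ m) n)^2) \<le> (1 - (1-a^2)*(1-r^2)/(1+a*r)^2)^m"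
proof -
  define c where "c = Tf a ^ m"
  have P: "l2 (Tr a r ^ m * 1) \<and> nr (Tr a r ^ m * 1) \<le> (1 - (1-a^2)*(1-r^2)/(1+a*r)^2)^m * nr 1"
    by (rule Tr_pow[OF l2_one a r])
  have sce: "sc r c = Tr a r ^ m" unfolding c_def sc_power sc_Tf ..
  have ls: "summable (\<lambda>n. (fps_nth (sc r c) n)^2)" using P sce unfolding l2_def by simp
  have "r^(2*L) * (\<Sum>n\<le>L. (fps_nth c n)^2) = (\<Sum>n\<le>L. r^(2*L) * (fps_nth c n)^2)"
    by (simp add: sum_distrib_left)
  also have "\<dots> \<le> (\<Sum>n\<le>L. (fps_nth (sc r c) n)^2)"
  proof (rule sum_mono)
    fix n assume "n \<in> {..L}"
    then have "r^(2*L) \<le> r^(2*n)" using r by (intro power_decreasing) auto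
    then have "r^(2*L) * (fps_nth c n)^2 \<le> r^(2*n) * (fps_nth c n)^2" by (rule mult_right_mono) simp
    also have "r^(2*n) * (fps_nth c n)^2 = (fps_nth (sc r c) n)^2"
      by (simp add: sc_nth power_mult_distrib power_mult[symmetric] mult.commute)
    finally show "r^(2*L) * (fps_nth c n)^2 \<le> (fps_nth (sc r c) n)^2" .
  qed
  also have "\<dots> \<le> nr (sc r c)" unfolding nr_def using ls
    by (intro sum_le_suminf) auto
  also have "\<dots> \<le> (1 - (1-a^2)*(1-r^2)/(1+a*r)^2)^m" using P sce nr_one by simp
  finally show ?thesis unfolding c_def .
qed


lemma exp_lower_1m: fixes x :: real assumes "0 \<le> x" "x \<le> 1/2" shows "exp (-2*x) \<le> 1 - x"
proof -
  have "- x - 2 * x^2 \<le> ln (1 - x)" using ln_one_minus_pos_lower_bound[OF assms] .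
  moreover have "2 * x^2 \<le> x"
  proof -
    have "x * (2*x) \<le> x * 1" using assms by (intro mult_left_mono) auto
    then show ?thesis by (simp add: power2_eq_square algebra_simps)
  qed
  ultimately have "-2*x \<le> ln (1 - x)" by linarith
  then have "exp (-2*x) \<le> exp (ln (1 - x))" by simp
  also have "exp (ln (1-x)) = 1 - x" using assms by simp
  finally show ?thesis .
qed

lemma rho_bound: fixes a r :: real
  assumes a: "0 < a" "a < 1" and r: "0 < r" "r \<le> 1"
  shows "1 - (1-a^2)*(1-r^2)/(1+a*r)^2 \<le> 1 - (1-a)/(1+a) * (1-r)"
proof -
  have p1: "0 < 1 + a*r" using a r by (simp add: add_pos_pos)
  have "(1+a*r)^2 \<le> (1+a)^2" using a r p1 by (intro power_mono) (auto simp: mult_left_le)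
  have "(1-a^2)*(1-r) / (1+a)^2 = ((1+a) * ((1-a)*(1-r))) / ((1+a)*(1+a))"
    by (simp add: power2_eq_square algebra_simps)
  also have "\<dots> = ((1-a)*(1-r)) / (1+a)" using a by (subst mult_divide_mult_cancel_left) auto
  finally have "(1-a)/(1+a) * (1-r) = (1-a^2)*(1-r) / (1+a)^2" by simp
  also have "\<dots> \<le> (1-a^2)*(1-r^2) / (1+a)^2"
  proof (rule divide_right_mono)
    have "1 - r \<le> 1 - r^2" using r by (simp add: power2_eq_square mult_left_le)
    moreover have "0 \<le> 1 - a^2" using a by (simp add: power_le_one abs_le_square_iff)
    ultimately show "(1-a^2)*(1-r) \<le> (1-a^2)*(1-r^2)" by (rule mult_left_mono)
  qed simp
  also have "\<dots> \<le> (1-a^2)*(1-r^2) / (1+a*r)^2"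
  proof (rule divide_left_mono)
    show "0 \<le> (1-a^2)*(1-r^2)" using a r
      by (intro mult_nonneg_nonneg) (auto simp: power_le_one abs_le_square_iff)
    show "(1+a*r)^2 \<le> (1+a)^2" by fact
    show "0 < (1+a)^2 * (1+a*r)^2" using a p1 by simp
  qed
  finally show ?thesis by linarith
qed

lemma tail_lower: fixes a :: real assumes a: "0 < a" "a < 1"
  shows "\<exists>c0>0. \<exists>\<epsilon>>0. \<exists>M. \<forall>m L. M \<le> m \<longrightarrow> real L \<le> \<epsilon> * real m \<longrightarrow>
           c0 \<le> (\<Sum>n\<in>{L<..<m}. (fps_nth (Tf a ^ m) n)^2)"
proof -
  obtain \<delta> where d0: "\<delta> > 0" and dm: "\<And>m. 2 \<le> m \<Longrightarrow> \<delta> * real m \<le> (\<Sum>n<m. (real m - real n) * (fps_nth (Tf a ^ m) n)^2)"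
    using mass[OF a] by blast
  define \<kappa> where "\<kappa> = (1-a)/(1+a)"
  have k0: "0 < \<kappa>" "\<kappa> < 1" unfolding \<kappa>_def using a by auto
  define \<epsilon> where "\<epsilon> = \<kappa>/8"
  define sp where "sp = 2 * \<bar>ln (2/\<delta>)\<bar> / \<kappa> + 1"
  have sp0: "0 < sp" unfolding sp_def using k0 by (simp add: add_nonneg_pos)
  have ks: "ln (2/\<delta>) \<le> \<kappa> * sp / 2"
  proof -
    have "\<kappa> * sp / 2 = \<bar>ln (2/\<delta>)\<bar> + \<kappa>/2" unfolding sp_def using k0 by (simp add: field_simps)
    then show ?thesis using k0 by linarith
  qed
  define M where "M = nat (ceiling (2 * sp)) + 2"
  have "\<delta>/2 \<le> (\<Sum>n\<in>{L<..<m}. (fps_nth (Tf a ^ m) n)^2)" if mM: "M \<le> m" and Lm: "real L \<le> \<epsilon> * real m" for m L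
  proof -
    define p where "p n = (fps_nth (Tf a ^ m) n)^2" for n
    have p0: "0 \<le> p n" for n unfolding p_def by simp
    have m2: "2 \<le> m" using mM unfolding M_def by simp
    have m2s: "2 * sp \<le> real m" using mM unfolding M_def by linarith
    have mpos: "0 < real m" using m2 by simp
    have Llt: "L < m"
    proof -
      have "\<epsilon> * real m < real m" unfolding \<epsilon>_def using k0 mpos by simp
      then show ?thesis using Lm by linarith
    qed
    define Slow where "Slow = (\<Sum>n\<le>L. p n)"
    define Smid where "Smid = (\<Sum>n\<in>{L<..<m}. p n)"
    have split: "{..<m} = {..L} \<union> {L<..<m}" using Llt by auto
    have "\<delta> * real m \<le> (\<Sum>n<m. (real m - real n) * p n)" using dm[OF m2] unfolding p_def .
    also have "\<dots> \<le> (\<Sum>n<m. real m * p n)"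
      by (intro sum_mono mult_right_mono p0) auto
    also have "\<dots> = real m * (Slow + Smid)"
      unfolding Slow_def Smid_def sum_distrib_left[symmetric] split
      by (subst sum.union_disjoint) auto
    finally have A: "\<delta> \<le> Slow + Smid" using mpos by (simp add: mult.commute)
    define x where "x = sp / real m"
    have x0: "0 \<le> x" "x \<le> 1/2" unfolding x_def using sp0 mpos m2s by (auto simp: field_simps)
    define r where "r = 1 - x"
    have r0: "0 < r" "r \<le> 1" unfolding r_def using x0 by auto
    define \<rho> where "\<rho> = 1 - (1-a^2)*(1-r^2)/(1+a*r)^2"
    have low: "r^(2*L) * Slow \<le> \<rho>^m" unfolding Slow_def p_def \<rho>_def by (rule lowmass[OF a r0])
    have rho0: "0 \<le> \<rho>" unfolding \<rho>_def by (rule rho_nonneg[OF a r0])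
    have "\<rho> \<le> 1 - \<kappa> * x" unfolding \<rho>_def \<kappa>_def using rho_bound[OF a r0] unfolding r_def by simp
    also have "\<dots> \<le> exp (- (\<kappa> * x))" using exp_ge_add_one_self[of "- (\<kappa> * x)"] by simp
    finally have "\<rho>^m \<le> exp (- (\<kappa> * x))^m" using rho0 by (intro power_mono)
    also have "exp (- (\<kappa> * x))^m = exp (- (\<kappa> * sp))"
      unfolding exp_of_nat_mult[symmetric] x_def using mpos by simp
    finally have B1: "\<rho>^m \<le> exp (- (\<kappa> * sp))" .
    have "exp (-2*x) \<le> r" unfolding r_def by (rule exp_lower_1m[OF x0])
    then have "exp (-2*x)^(2*L) \<le> r^(2*L)" by (intro power_mono) auto
    moreover have "exp (-2*x)^(2*L) = exp (- (4 * sp * (real L / real m)))"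
      unfolding exp_of_nat_mult[symmetric] x_def by (simp add: algebra_simps)
    moreover have "exp (- (\<kappa> * sp / 2)) \<le> exp (- (4 * sp * (real L / real m)))"
    proof -
      have "real L / real m \<le> \<epsilon>" using Lm mpos by (simp add: divide_le_eq mult.commute)
      then have "4 * sp * (real L / real m) \<le> 4 * sp * \<epsilon>" using sp0 by (intro mult_left_mono) auto
      then show ?thesis unfolding \<epsilon>_def by simp
    qed
    ultimately have B2: "exp (- (\<kappa> * sp / 2)) \<le> r^(2*L)" by linarith
    have "exp (- (\<kappa> * sp / 2)) * Slow \<le> r^(2*L) * Slow"
      using B2 by (rule mult_right_mono) (simp add: Slow_def p0 sum_nonneg)
    also have "\<dots> \<le> exp (- (\<kappa> * sp))" using low B1 by linarith
    also have "exp (- (\<kappa> * sp)) = exp (- (\<kappa> * sp / 2)) * exp (- (\<kappa> * sp / 2))"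
      by (simp add: exp_add[symmetric])
    finally have "Slow \<le> exp (- (\<kappa> * sp / 2))" by simp
    also have "\<dots> \<le> exp (- ln (2/\<delta>))" using ks by simp
    also have "exp (- ln (2/\<delta>)) = \<delta>/2" using d0 by (simp add: exp_minus)
    finally have "Slow \<le> \<delta>/2" .
    then show ?thesis using A unfolding Smid_def p_def by linarith
  qed
  moreover have "0 < \<delta>/2" using d0 by simp
  moreover have "0 < \<epsilon>" unfolding \<epsilon>_def using k0 by simp
  ultimately show ?thesis by blast
qed


definition cf :: "real fps \<Rightarrow> complex fps" where
  "cf G = Abs_fps (\<lambda>n. complex_of_real (fps_nth G n))"

lemma cf_nth: "fps_nth (cf G) n = complex_of_real (fps_nth G n)"
  unfolding cf_def by simp

lemma cf_mult: "cf (F * G) = cf F * cf G"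
  by (rule fps_ext) (simp add: cf_nth fps_mult_nth)

lemma cf_add: "cf (F + G) = cf F + cf G"
  by (rule fps_ext) (simp add: cf_nth)

lemma cf_const: "cf (fps_const c) = fps_const (complex_of_real c)"
  by (rule fps_ext) (simp add: cf_nth)

lemma cf_one: "cf 1 = 1"
  by (rule fps_ext) (simp add: cf_nth)

lemma cf_X: "cf fps_X = fps_X"
  by (rule fps_ext) (simp add: cf_nth fps_X_nth)

lemma cf_inverse: assumes "fps_nth F 0 \<noteq> 0" shows "cf (inverse F) = inverse (cf F)"
proof -
  have "cf F * cf (inverse F) = 1"
    using assms by (simp add: cf_mult[symmetric] inverse_mult_eq_1' cf_one)
  then show ?thesis by (rule fps_inverse_unique[symmetric])
qed

lemma cf_power: "cf (F ^ m) = cf F ^ m"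
  by (induction m) (simp_all add: cf_one cf_mult)

lemma cf_Tf: "cf (Tf a) = (fps_const (complex_of_real a) + fps_X) * inverse (1 + fps_const (complex_of_real a) * fps_X)"
  unfolding Tf_def by (simp add: cf_mult cf_add cf_const cf_X cf_inverse cf_one)

lemma fps_exp_power: fixes f :: "complex \<Rightarrow> complex"
  assumes h: "f has_fps_expansion F" shows "(\<lambda>x. f x ^ n) has_fps_expansion F ^ n"
proof (induction n)
  case 0 show ?case by simp
next
  case (Suc n)
  have "(\<lambda>x. f x * f x ^ n) has_fps_expansion F * F ^ n"
    by (rule has_fps_expansion_mult[OF h Suc.IH])
  then show ?case by simp
qed

lemma T_expansion: "(\<lambda>z. (T (complex_of_real a) z)^m) has_fps_expansion cf (Tf a ^ m)"
proof -
  have e: "(\<lambda>z. (T (complex_of_real a) z)^m) = (\<lambda>z. ((complex_of_real a + z) * inverse (1 + complex_of_real a * z))^m)"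
    unfolding T_def by (simp add: divide_inverse)
  have "(\<lambda>z. (complex_of_real a + z) * inverse (1 + complex_of_real a * z)) has_fps_expansion
        (fps_const (complex_of_real a) + fps_X) * inverse (1 + fps_const (complex_of_real a) * fps_X)"
    by (intro has_fps_expansion_mult has_fps_expansion_add has_fps_expansion_const
        has_fps_expansion_fps_X has_fps_expansion_inverse has_fps_expansion_1
        has_fps_expansion_cmult_left) simp
  then have "(\<lambda>z. ((complex_of_real a + z) * inverse (1 + complex_of_real a * z))^m) has_fps_expansion
        ((fps_const (complex_of_real a) + fps_X) * inverse (1 + fps_const (complex_of_real a) * fps_X))^m"
    by (rule fps_exp_power)
  then show ?thesis unfolding e cf_power cf_Tf .
qed

lemma T_coeff: "taylor_coeff ((\<lambda>z. z^m) \<circ> T (complex_of_real a)) n = complex_of_real (fps_nth (Tf a ^ m) n)"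
proof -
  have "((\<lambda>z. z^m) \<circ> T (complex_of_real a)) = (\<lambda>z. (T (complex_of_real a) z)^m)" by (simp add: o_def)
  then show ?thesis
    unfolding taylor_coeff_def using fps_nth_fps_expansion[OF T_expansion, of a m n]
    by (simp add: cf_nth)
qed

lemma zm_coeff: "taylor_coeff (\<lambda>z. z^m) n = (if n = m then 1 else 0)"
  unfolding taylor_coeff_def using fps_nth_fps_expansion[OF has_fps_expansion_fps_X_power, of m n]
  by simp

lemma beta_pos: "0 < beta0 n"
  unfolding beta0_def by (simp add: Let_def)

lemma beta_block:
  assumes k: "3 \<le> k" and n: "fact k < n" "n \<le> (fact (Suc k) :: nat)"
  shows "beta0 n = (if n = fact (Suc k) - 1 then 1 / fact (Suc k) else 1 / fact k)"
proof -
  have "(fact 3 :: nat) \<le> fact k" using k by (rule fact_mono)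
  then have n6: "\<not> n \<le> 6" using n by (simp add: eval_nat_numeral)
  have the: "(THE k'. 3 \<le> k' \<and> fact k' < n \<and> n \<le> (fact (Suc k') :: nat)) = k"
  proof (rule the_equality)
    show "3 \<le> k \<and> fact k < n \<and> n \<le> (fact (Suc k) :: nat)" using k n by simp
  next
    fix k' assume h: "3 \<le> k' \<and> fact k' < n \<and> n \<le> (fact (Suc k') :: nat)"
    show "k' = k"
    proof (rule ccontr)
      assume "k' \<noteq> k"
      then consider "Suc k' \<le> k" | "Suc k \<le> k'" by linarith
      then show False
      proof cases
        case 1
        then have "(fact (Suc k') :: nat) \<le> fact k" by (rule fact_mono)
        then show False using h n by linarith
      next
        case 2
        then have "(fact (Suc k) :: nat) \<le> fact k'" by (rule fact_mono)
        then show False using h n by linarith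
      qed
    qed
  qed
  show ?thesis unfolding beta0_def Let_def the using n6 by simp
qed


theorem mainTheorem14:
  fixes a :: real
  assumes "0 < a" and "a < 1"
  shows "\<not> bounded_comp_op beta0 (T (complex_of_real a))"
proof
  have a: "0 < a" "a < 1" using assms by auto
  assume "bounded_comp_op beta0 (T (complex_of_real a))"
  then obtain C where hC: "\<And>f. in_H2 beta0 f \<Longrightarrow> in_H2 beta0 (f \<circ> T (complex_of_real a)) \<and>
      H2_norm beta0 (f \<circ> T (complex_of_real a)) \<le> C * H2_norm beta0 f"
    unfolding bounded_comp_op_def by blast
  obtain c0 \<epsilon> M where c0: "0 < c0" and e0: "0 < \<epsilon>" and hM: "\<And>m L. M \<le> m \<Longrightarrow> real L \<le> \<epsilon> * real m \<Longrightarrow>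
           c0 \<le> (\<Sum>n\<in>{L<..<m}. (fps_nth (Tf a ^ m) n)^2)"
    using tail_lower[OF a] by blast
  define k where "k = 3 + M + nat (ceiling (1/\<epsilon>)) + nat (ceiling (C^2/c0))"
  have k3: "3 \<le> k" and kM: "M \<le> k" unfolding k_def by auto
  have ke: "1/\<epsilon> \<le> real k" unfolding k_def by linarith
  have kc: "C^2/c0 \<le> real k" unfolding k_def by linarith
  define L where "L = (fact k :: nat)"
  define m where "m = (fact (Suc k) :: nat) - 1"
  have L1: "1 \<le> L" unfolding L_def by (simp add: Suc_le_eq)
  have fS: "(fact (Suc k) :: nat) = Suc k * L" unfolding L_def by simp
  have mk: "k * L \<le> m" unfolding m_def fS using L1 by simp
  have Lm: "L < m"
  proof -
    have "3 * L \<le> k * L" using k3 by simp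
    then show ?thesis using mk L1 by linarith
  qed
  have Mm: "M \<le> m"
  proof -
    have "k \<le> k * L" using L1 by simp
    then show ?thesis using mk kM by linarith
  qed
  have Lem: "real L \<le> \<epsilon> * real m"
  proof -
    have "1 \<le> \<epsilon> * real k" using ke e0 by (simp add: field_simps)
    then have "real L \<le> \<epsilon> * real k * real L" using L1 by (simp add: mult_le_cancel_right1)
    also have "\<dots> \<le> \<epsilon> * real m"
    proof -
      have "real k * real L \<le> real m" using mk by (metis of_nat_le_iff of_nat_mult)
      then show ?thesis using e0 by (simp add: mult.assoc)
    qed
    finally show ?thesis .
  qed
  have mid: "c0 \<le> (\<Sum>n\<in>{L<..<m}. (fps_nth (Tf a ^ m) n)^2)" by (rule hM[OF Mm Lem])
  have mS: "m \<le> (fact (Suc k) :: nat)" "L < m" unfolding m_def using Lm unfolding m_def by auto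
  have beta_m: "beta0 m = 1 / fact (Suc k)"
    using beta_block[OF k3, of m] mS unfolding L_def m_def by simp
  have beta_mid: "beta0 n = 1 / fact k" if "n \<in> {L<..<m}" for n
  proof -
    have "fact k < n" "n \<le> (fact (Suc k)::nat)" "n \<noteq> fact (Suc k) - 1"
      using that mS unfolding L_def m_def by auto
    then show ?thesis using beta_block[OF k3, of n] by simp
  qed
  define f :: "complex \<Rightarrow> complex" where "f = (\<lambda>z. z^m)"
  have sumf: "(\<lambda>n. (cmod (taylor_coeff f n))^2 * beta0 n) = (\<lambda>n. if n = m then beta0 m else 0)"
    unfolding f_def zm_coeff by (rule ext) simp
  have fH: "in_H2 beta0 f"
    unfolding in_H2_def
  proof
    show "f holomorphic_on ball 0 1" unfolding f_def by (intro holomorphic_intros)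
    show "summable (\<lambda>n. (cmod (taylor_coeff f n))^2 * beta0 n)" unfolding sumf by (rule summable_single)
  qed
  have nf: "H2_norm beta0 f = sqrt (1 / fact (Suc k))"
  proof -
    have "(\<lambda>n. if n = m then beta0 m else 0) sums beta0 m" by (rule sums_single)
    then show ?thesis unfolding H2_norm_def sumf beta_m by (simp add: sums_iff)
  qed
  obtain gH: "in_H2 beta0 (f \<circ> T (complex_of_real a))"
    and gN: "H2_norm beta0 (f \<circ> T (complex_of_real a)) \<le> C * H2_norm beta0 f"
    using hC[OF fH] by blast
  define c where "c n = fps_nth (Tf a ^ m) n" for n
  have tg: "(cmod (taylor_coeff (f \<circ> T (complex_of_real a)) n))^2 * beta0 n = (c n)^2 * beta0 n" for n
    unfolding f_def T_coeff c_def by simp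
  have sg: "summable (\<lambda>n. (c n)^2 * beta0 n)" using gH unfolding in_H2_def tg by simp
  have "(\<Sum>n\<in>{L<..<m}. (c n)^2 * beta0 n) \<le> (\<Sum>n. (c n)^2 * beta0 n)"
    using sg by (intro sum_le_suminf) (auto intro: mult_nonneg_nonneg less_imp_le[OF beta_pos])
  moreover have "(\<Sum>n\<in>{L<..<m}. (c n)^2 * beta0 n) = (\<Sum>n\<in>{L<..<m}. (c n)^2) / fact k"
    by (simp add: beta_mid sum_divide_distrib)
  moreover have "c0 / fact k \<le> (\<Sum>n\<in>{L<..<m}. (c n)^2) / fact k"
    using mid unfolding c_def by (simp add: divide_right_mono)
  ultimately have low: "c0 / fact k \<le> (\<Sum>n. (c n)^2 * beta0 n)" by linarith
  have "H2_norm beta0 (f \<circ> T (complex_of_real a)) = sqrt (\<Sum>n. (c n)^2 * beta0 n)"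
    unfolding H2_norm_def tg ..
  then have "sqrt (c0 / fact k) \<le> C * sqrt (1 / fact (Suc k))"
    using gN nf low by (metis real_sqrt_le_mono order_trans)
  then have "(sqrt (c0 / fact k))^2 \<le> (C * sqrt (1 / fact (Suc k)))^2"
    using c0 by (intro power_mono) auto
  then have "c0 / fact k \<le> C^2 * (1 / fact (Suc k))"
    using c0 by (simp add: power_mult_distrib)
  then have "c0 / fact k \<le> C^2 / ((real k + 1) * fact k)"
    by (simp add: algebra_simps)
  then have "c0 / fact k * ((real k + 1) * fact k) \<le> C^2 / ((real k + 1) * fact k) * ((real k + 1) * fact k)"
    by (rule mult_right_mono) simp
  moreover have "c0 / fact k * ((real k + 1) * fact k) = c0 * (real k + 1)" by simp
  moreover have "C^2 / ((real k + 1) * fact k) * ((real k + 1) * fact k) = C^2"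
  proof -
    have "(real k + 1) * fact k \<noteq> 0" by (simp add: add_pos_pos)
    then show ?thesis by simp
  qed
  ultimately have "c0 * (real k + 1) \<le> C^2" by simp
  moreover have "C^2 \<le> c0 * real k" using kc c0 by (simp add: field_simps)
  moreover have "c0 * (real k + 1) = c0 * real k + c0" by (simp add: algebra_simps)
  ultimately show False using c0 by linarith
qed

end
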